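(* Let $\Lambda$ be a row-finite $2$-graph with no sources, and suppose $(\alpha_1,\alpha_2,\beta_1,\beta_2)$ is a $(1,1)$-aperiodic quartet at $u\in\Lambda^0$. Then $\Lambda$ has no local periodicity at $u$.
   Context: A $k$-graph is a countable category $\Lambda$ with a functor $d:\Lambda\to\mathbb{N}^k$ satisfying the factorization property: whenever $d(\lambda)=m+n$ there are unique $\mu,\nu$ with $\lambda=\mu\nu$, $d(\mu)=m$, $d(\nu)=n$. $\Lambda^n=d^{-1}(n)$, $\Lambda^0$ the vertices, $r,s$ range and source, $v\Lambda=\{\lambda:r(\lambda)=v\}$, $v\Lambda^n w=\{\lambda: r(\lambda)=v, d(\lambda)=n, s(\lambda)=w\}$. Row-finite: each $v\Lambda^n$ finite; no sources: $v\Lambda^{e_i}\ne\emptyset$ for all $v,i$ ($e_1,e_2$ standard generators of $\mathbb{N}^2$). For $0\le m\le n\le d(\lambda)$, $\lambda(m,n)$ is the unique path with $\lambda=\lambda'\lambda(m,n)\lambda''$, $d(\lambda')=m$, $d(\lambda(m,n))=n-m$. $\Lambda$ has no local periodicity at $v$ if for each $m\neq n\in\mathbb{N}^k$ there is $\lambda\in v\Lambda$ with $d(\lambda)\ge m\vee n$ and $\lambda(m,m+d(\lambda)-(m\vee n))\neq\lambda(n,n+d(\lambda)-(m\vee n))$ ($\vee$ = coordinatewise max). For positive integers $a,b$, an $(a,b)$-aperiodic quartet at $u$ is a tuple $(\alpha_1,\alpha_2,\beta_1,\beta_2)$ with $\alpha_1\neq\alpha_2$ in $u\Lambda^{ae_1}u$,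 $\beta_1\neq\beta_2$ in $u\Lambda^{be_2}u$, such that $\beta_2\alpha_1=\alpha_1\beta_2$, $\beta_2\alpha_2=\alpha_2\beta_2$, $\beta_1\alpha_1=\alpha_2\beta_1$, $\beta_1\alpha_2=\alpha_1\beta_1$. *)

theory Defs
  imports Main "HOL-Library.Product_Plus" "HOL-Library.Product_Order" "HOL-Library.Countable_Set"
begin

text \<open>A 2-graph: a countable small category (morphisms Mor, identity morphisms = vertices Obj,
 range r, source s, composition comp) with a degree functor d into N^2 = nat \<times> nat
 satisfying the unique factorization property.\<close>

record 'm twograph =
  Mor  :: "'m set"
  Obj  :: "'m set"
  rng  :: "'m \<Rightarrow> 'm"
  src  :: "'m \<Rightarrow> 'm"
  comp :: "'m \<Rightarrow> 'm \<Rightarrow> 'm"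
  deg  :: "'m \<Rightarrow> nat \<times> nat"

definition e1 :: "nat \<times> nat" where "e1 = (1, 0)"
definition e2 :: "nat \<times> nat" where "e2 = (0, 1)"

definition is_2graph :: "'m twograph \<Rightarrow> bool" where
  "is_2graph G \<longleftrightarrow>
     countable (Mor G) \<and> Obj G \<subseteq> Mor G \<and>
     (\<forall>x\<in>Mor G. rng G x \<in> Obj G \<and> src G x \<in> Obj G) \<and>
     (\<forall>v\<in>Obj G. rng G v = v \<and> src G v = v) \<and>
     (\<forall>x\<in>Mor G. \<forall>y\<in>Mor G. src G x = rng G y \<longrightarrow>
        comp G x y \<in> Mor G \<and> rng G (comp G x y) = rng G x \<and> src G (comp G x y) = src G y) \<and>
     (\<forall>x\<in>Mor G. comp G (rng G x) x = x \<and> comp G x (src G x) = x) \<and>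
     (\<forall>x\<in>Mor G. \<forall>y\<in>Mor G. \<forall>z\<in>Mor G. src G x = rng G y \<longrightarrow> src G y = rng G z \<longrightarrow>
        comp G (comp G x y) z = comp G x (comp G y z)) \<and>
     (\<forall>v\<in>Obj G. deg G v = 0) \<and>
     (\<forall>x\<in>Mor G. \<forall>y\<in>Mor G. src G x = rng G y \<longrightarrow> deg G (comp G x y) = deg G x + deg G y) \<and>
     (\<forall>l\<in>Mor G. \<forall>m n. deg G l = m + n \<longrightarrow>
        (\<exists>!p. fst p \<in> Mor G \<and> snd p \<in> Mor G \<and> src G (fst p) = rng G (snd p) \<and>
              l = comp G (fst p) (snd p) \<and> deg G (fst p) = m \<and> deg G (snd p) = n))"

definition row_finite :: "'m twograph \<Rightarrow> bool" where
  "row_finite G \<longleftrightarrow> (\<forall>v\<in>Obj G. \<forall>n. finite {l\<in>Mor G. rng G l = v \<and> deg G l = n})"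

definition no_sources :: "'m twograph \<Rightarrow> bool" where
  "no_sources G \<longleftrightarrow> (\<forall>v\<in>Obj G. \<forall>i\<in>{e1, e2}. \<exists>l\<in>Mor G. rng G l = v \<and> deg G l = i)"

text \<open>The segment l(m,n) for 0 \<le> m \<le> n \<le> d(l).\<close>
definition seg :: "'m twograph \<Rightarrow> 'm \<Rightarrow> nat \<times> nat \<Rightarrow> nat \<times> nat \<Rightarrow> 'm" where
  "seg G l m n = (THE x. x \<in> Mor G \<and> deg G x = n - m \<and>
     (\<exists>a\<in>Mor G. \<exists>b\<in>Mor G. deg G a = m \<and> src G a = rng G x \<and> src G x = rng G b \<and>
        l = comp G (comp G a x) b))"

definition no_local_periodicity_at :: "'m twograph \<Rightarrow> 'm \<Rightarrow> bool" where
  "no_local_periodicity_at G v \<longleftrightarrow>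
     (\<forall>m n :: nat \<times> nat. m \<noteq> n \<longrightarrow>
        (\<exists>l\<in>Mor G. rng G l = v \<and> sup m n \<le> deg G l \<and>
           seg G l m (m + deg G l - sup m n) \<noteq> seg G l n (n + deg G l - sup m n)))"

definition aperiodic_quartet ::
  "'m twograph \<Rightarrow> nat \<Rightarrow> nat \<Rightarrow> 'm \<Rightarrow> 'm \<Rightarrow> 'm \<Rightarrow> 'm \<Rightarrow> 'm \<Rightarrow> bool" where
  "aperiodic_quartet G a b u al1 al2 be1 be2 \<longleftrightarrow>
     u \<in> Obj G \<and>
     (\<forall>x\<in>{al1, al2}. x \<in> Mor G \<and> rng G x = u \<and> src G x = u \<and> deg G x = (a, 0)) \<and>
     (\<forall>x\<in>{be1, be2}. x \<in> Mor G \<and> rng G x = u \<and> src G x = u \<and> deg G x = (0, b)) \<and>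
     al1 \<noteq> al2 \<and> be1 \<noteq> be2 \<and>
     comp G be2 al1 = comp G al1 be2 \<and> comp G be2 al2 = comp G al2 be2 \<and>
     comp G be1 al1 = comp G al2 be1 \<and> comp G be1 al2 = comp G al1 be1"

end

theory Submission
  imports Defs
begin

primrec pw :: "'m twograph \<Rightarrow> 'm \<Rightarrow> 'm \<Rightarrow> nat \<Rightarrow> 'm" where
  "pw G u x 0 = u"
| "pw G u x (Suc k) = comp G x (pw G u x k)"

lemma G_comp:
  assumes "is_2graph G" "x \<in> Mor G" "y \<in> Mor G" "src G x = rng G y"
  shows "comp G x y \<in> Mor G" "rng G (comp G x y) = rng G x" "src G (comp G x y) = src G y"
    "deg G (comp G x y) = deg G x + deg G y"
  using assms unfolding is_2graph_def by blast+

lemma G_fact: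
  assumes "is_2graph G" "l \<in> Mor G" "deg G l = m + n"
  shows "\<exists>!p. fst p \<in> Mor G \<and> snd p \<in> Mor G \<and> src G (fst p) = rng G (snd p) \<and>
              l = comp G (fst p) (snd p) \<and> deg G (fst p) = m \<and> deg G (snd p) = n"
  using assms unfolding is_2graph_def by blast

lemma ex1u: "\<exists>!x. P x \<Longrightarrow> P a \<Longrightarrow> P b \<Longrightarrow> a = b" by blast

lemma seg_eq:
  assumes G: "is_2graph G"
    and ab: "a \<in> Mor G" "x \<in> Mor G" "b \<in> Mor G"
    and c: "src G a = rng G x" "src G x = rng G b"
    and d: "deg G a = m" "deg G x = k"
    and l: "l = comp G (comp G a x) b"
  shows "seg G l m (m + k) = x"
proof -
  have mk: "m + k - m = k" by (cases m, cases k) simp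
  have ax: "comp G a x \<in> Mor G" "rng G (comp G a x) = rng G a" "src G (comp G a x) = src G x"
    "deg G (comp G a x) = m + k"
    using G_comp[OF G ab(1,2) c(1)] d by auto
  have lM: "l \<in> Mor G" "deg G l = m + k + deg G b"
    using G_comp[OF G ax(1) ab(3)] ax c l by auto
  show ?thesis unfolding seg_def
  proof (rule the_equality)
    show "x \<in> Mor G \<and> deg G x = m + k - m \<and>
     (\<exists>a\<in>Mor G. \<exists>b\<in>Mor G. deg G a = m \<and> src G a = rng G x \<and> src G x = rng G b \<and>
        l = comp G (comp G a x) b)" using ab c d l mk by (intro conjI bexI[of _ a] bexI[of _ b]) auto
  next
    fix y assume "y \<in> Mor G \<and> deg G y = m + k - m \<and>
     (\<exists>a\<in>Mor G. \<exists>b\<in>Mor G. deg G a = m \<and> src G a = rng G y \<and> src G y = rng G b \<and>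
        l = comp G (comp G a y) b)"
    then obtain a' b' where y: "y \<in> Mor G" "deg G y = k" "a' \<in> Mor G" "b' \<in> Mor G"
      "deg G a' = m" "src G a' = rng G y" "src G y = rng G b'" "l = comp G (comp G a' y) b'"
      using mk by auto
    have ay: "comp G a' y \<in> Mor G" "rng G (comp G a' y) = rng G a'" "src G (comp G a' y) = src G y"
      "deg G (comp G a' y) = m + k"
      using G_comp[OF G y(3,1,6)] y by auto
    have "deg G l = m + k + deg G b'" using G_comp[OF G ay(1) y(4)] ay y by auto
    hence db: "deg G b' = deg G b" using lM by simp
    have U: "\<exists>!p. fst p \<in> Mor G \<and> snd p \<in> Mor G \<and> src G (fst p) = rng G (snd p) \<and>
              l = comp G (fst p) (snd p) \<and> deg G (fst p) = m + k \<and> deg G (snd p) = deg G b"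
      using G_fact[OF G lM(1,2)] .
    have "(comp G a x, b) = (comp G a' y, b')"
      by (rule ex1u[OF U]) (use ax ay y ab c l db in auto)
    hence e: "comp G a x = comp G a' y" by simp
    have U2: "\<exists>!p. fst p \<in> Mor G \<and> snd p \<in> Mor G \<and> src G (fst p) = rng G (snd p) \<and>
              comp G a x = comp G (fst p) (snd p) \<and> deg G (fst p) = m \<and> deg G (snd p) = k"
      using G_fact[OF G ax(1,4)] .
    have "(a, x) = (a', y)"
      by (rule ex1u[OF U2]) (use e ab c d y in auto)
    thus "y = x" by simp
  qed
qed

locale Q =
  fixes G :: "'m twograph" and u a1 a2 b1 b2 :: 'm
  assumes G: "is_2graph G" and AQ: "aperiodic_quartet G 1 1 u a1 a2 b1 b2"
begin

definition L where "L = {x \<in> Mor G. rng G x = u \<and> src G x = u}"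

abbreviation c where "c \<equiv> comp G"
abbreviation P where "P \<equiv> pw G u"

lemma uL: "u \<in> L"
  using G AQ unfolding is_2graph_def aperiodic_quartet_def L_def by auto

lemma gens: "a1 \<in> L" "a2 \<in> L" "b1 \<in> L" "b2 \<in> L"
  "deg G a1 = (1,0)" "deg G a2 = (1,0)" "deg G b1 = (0,1)" "deg G b2 = (0,1)"
  "a1 \<noteq> a2" "b1 \<noteq> b2"
  "c b2 a1 = c a1 b2" "c b2 a2 = c a2 b2" "c b1 a1 = c a2 b1" "c b1 a2 = c a1 b1"
  using AQ unfolding aperiodic_quartet_def L_def by auto

lemma cL: "x \<in> L \<Longrightarrow> y \<in> L \<Longrightarrow> c x y \<in> L"
  using G_comp[OF G] unfolding L_def by auto

lemma LM: "x \<in> L \<Longrightarrow> x \<in> Mor G" "x \<in> L \<Longrightarrow> rng G x = u" "x \<in> L \<Longrightarrow> src G x = u"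
  unfolding L_def by auto

lemma degc: "x \<in> L \<Longrightarrow> y \<in> L \<Longrightarrow> deg G (c x y) = deg G x + deg G y"
  using G_comp[OF G] unfolding L_def by auto

lemma assoc: "x \<in> L \<Longrightarrow> y \<in> L \<Longrightarrow> z \<in> L \<Longrightarrow> c (c x y) z = c x (c y z)"
  using G unfolding is_2graph_def L_def by auto

lemma unitl: "x \<in> L \<Longrightarrow> c u x = x"
  using G unfolding is_2graph_def L_def by force

lemma unitr: "x \<in> L \<Longrightarrow> c x u = x"
  using G unfolding is_2graph_def L_def by force

lemma pwL: "x \<in> L \<Longrightarrow> P x k \<in> L"
  by (induction k) (auto simp: uL cL)

lemma pw_add: "x \<in> L \<Longrightarrow> P x (i + j) = c (P x i) (P x j)"
  by (induction i) (auto simp: unitl pwL assoc)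

lemma pw1: "x \<in> L \<Longrightarrow> P x 1 = x"
  by (simp add: unitr)

lemma deg_pw: "x \<in> L \<Longrightarrow> deg G (P x k) = (k * fst (deg G x), k * snd (deg G x))"
proof (induction k)
  case 0 have "u \<in> Obj G" using AQ unfolding aperiodic_quartet_def by auto
  then show ?case using G unfolding is_2graph_def by (simp add: zero_prod_def)
next
  case (Suc k) then show ?case by (simp add: degc pwL prod_eq_iff)
qed

lemma twist: "x \<in> L \<Longrightarrow> y \<in> L \<Longrightarrow> z \<in> L \<Longrightarrow> c x y = c y z \<Longrightarrow>
   c (P x k) y = c y (P z k)"
proof (induction k)
  case 0 then show ?case by (simp add: unitl unitr)
next
  case (Suc k)
  have "c (P x (Suc k)) y = c x (c (P x k) y)" using Suc by (simp add: assoc pwL)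
  also have "\<dots> = c x (c y (P z k))" using Suc by simp
  also have "\<dots> = c (c x y) (P z k)" using Suc.prems(1-3) by (metis assoc pwL)
  also have "\<dots> = c (c y z) (P z k)" using Suc by simp
  also have "\<dots> = c y (c z (P z k))" using Suc by (simp add: assoc pwL)
  finally show ?case by simp
qed

lemma comm_pw: "x \<in> L \<Longrightarrow> y \<in> L \<Longrightarrow> c x y = c y x \<Longrightarrow> c (P x k) y = c y (P x k)"
  using twist by blast

lemma comm_c: "x \<in> L \<Longrightarrow> y \<in> L \<Longrightarrow> z \<in> L \<Longrightarrow> c x y = c y x \<Longrightarrow> c x z = c z x \<Longrightarrow>
   c x (c y z) = c (c y z) x"
  by (metis assoc)

lemma swap: "x \<in> L \<Longrightarrow> y \<in> L \<Longrightarrow> w \<in> L \<Longrightarrow> c x y = c y x \<Longrightarrow> c x (c y w) = c y (c x w)"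
  by (metis assoc)

lemmas Ls = gens(1-4) pwL cL uL

lemma segx: "a \<in> L \<Longrightarrow> x \<in> L \<Longrightarrow> b \<in> L \<Longrightarrow> deg G a = m \<Longrightarrow> deg G x = k
  \<Longrightarrow> l = c (c a x) b \<Longrightarrow> seg G l m (m + k) = x"
  by (rule seg_eq[OF G]) (auto simp: LM)


lemma caseA:
  assumes "fst m < fst n"
  shows "\<exists>l\<in>L. deg G l = sup m n + e1 \<and> seg G l m (m + e1) \<noteq> seg G l n (n + e1)"
proof -
  obtain m1 m2 n1 n2 where mn: "m = (m1, m2)" "n = (n1, n2)" by (cases m, cases n)
  define M2 where "M2 = max m2 n2"
  define k where "k = n1 - m1 - 1"
  define l where "l = c (c (P a1 n1) a2) (P b2 M2)"
  have m1: "m1 < n1" using assms mn by simp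
  have lL: "l \<in> L" unfolding l_def by (simp add: Ls)
  have dl: "deg G l = sup m n + e1"
    unfolding l_def mn e1_def M2_def using m1 by (simp add: degc Ls deg_pw gens sup_nat_def)
  have cb2a2: "c (P b2 j) a2 = c a2 (P b2 j)" for j by (rule comm_pw) (use gens in auto)
  have cb2a1: "c (P b2 j) a1 = c a1 (P b2 j)" for j by (rule comm_pw) (use gens in auto)
  have cb2K: "c (P a1 i) (P b2 j) = c (P b2 j) (P a1 i)" for i j
    by (rule comm_pw) (use gens cb2a1 in \<open>auto simp: Ls\<close>)
  have sn: "seg G l n (n + e1) = a2"
  proof (rule segx)
    show "l = c (c (c (P a1 n1) (P b2 n2)) a2) (P b2 (M2 - n2))"
    proof -
      have "P b2 M2 = c (P b2 n2) (P b2 (M2 - n2))"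
        using pw_add[OF gens(4), of n2 "M2 - n2"] M2_def by simp
      hence "l = c (P a1 n1) (c a2 (c (P b2 n2) (P b2 (M2 - n2))))" unfolding l_def by (simp add: assoc Ls)
      also have "\<dots> = c (P a1 n1) (c (P b2 n2) (c a2 (P b2 (M2 - n2))))"
        by (rule arg_cong[where f="c (P a1 n1)"], rule swap) (auto simp: Ls cb2a2)
      finally show ?thesis by (simp add: assoc Ls)
    qed
  qed (auto simp: Ls deg_pw degc gens mn e1_def)
  have sm: "seg G l m (m + e1) = a1"
  proof (rule segx)
    show "l = c (c (c (P a1 m1) (P b2 m2)) a1) (c (c (P a1 k) a2) (P b2 (M2 - m2)))"
    proof -
      have e1: "P b2 M2 = c (P b2 m2) (P b2 (M2 - m2))"
        using pw_add[OF gens(4), of m2 "M2 - m2"] M2_def by simp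
      have e2: "P a1 n1 = c (P a1 m1) (c a1 (P a1 k))"
      proof -
        have nk: "n1 = m1 + (1 + k)" unfolding k_def using m1 by simp
        show ?thesis unfolding nk pw_add[OF gens(1)] pw1[OF gens(1)] ..
      qed
      have "l = c (P a1 m1) (c a1 (c (P a1 k) (c a2 (c (P b2 m2) (P b2 (M2 - m2))))))"
        unfolding l_def e1 e2 by (simp add: assoc Ls)
      also have "\<dots> = c (P a1 m1) (c a1 (c (P a1 k) (c (P b2 m2) (c a2 (P b2 (M2 - m2))))))"
        by (intro arg_cong[where f="c (P a1 m1)"] arg_cong[where f="c a1"] arg_cong[where f="c (P a1 k)"], rule swap) (auto simp: Ls cb2a2)
      also have "\<dots> = c (P a1 m1) (c a1 (c (P b2 m2) (c (P a1 k) (c a2 (P b2 (M2 - m2))))))"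
        by (intro arg_cong[where f="c (P a1 m1)"] arg_cong[where f="c a1"], rule swap) (auto simp: Ls cb2K)
      also have "\<dots> = c (P a1 m1) (c (P b2 m2) (c a1 (c (P a1 k) (c a2 (P b2 (M2 - m2))))))"
        by (intro arg_cong[where f="c (P a1 m1)"], rule swap) (auto simp: Ls cb2a1)
      finally show ?thesis by (simp add: assoc Ls)
    qed
  qed (auto simp: Ls deg_pw degc gens mn e1_def)
  show ?thesis using lL dl sn sm gens by auto
qed

lemma caseB:
  assumes "snd m < snd n"
  shows "\<exists>l\<in>L. deg G l = sup m n + e2 \<and> seg G l m (m + e2) \<noteq> seg G l n (n + e2)"
proof -
  obtain m1 m2 n1 n2 where mn: "m = (m1, m2)" "n = (n1, n2)" by (cases m, cases n)
  define M1 where "M1 = max m1 n1"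
  define k where "k = n2 - m2 - 1"
  define l where "l = c (c (P a1 M1) (P b2 n2)) b1"
  have m2: "m2 < n2" using assms mn by simp
  have lL: "l \<in> L" unfolding l_def by (simp add: Ls)
  have dl: "deg G l = sup m n + e2"
    unfolding l_def mn e2_def M1_def using m2 by (simp add: degc Ls deg_pw gens sup_nat_def)
  have cb2a1: "c (P b2 j) a1 = c a1 (P b2 j)" for j by (rule comm_pw) (use gens in auto)
  have cb2K: "c (P a1 i) (P b2 j) = c (P b2 j) (P a1 i)" for i j
    by (rule comm_pw) (use gens cb2a1 in \<open>auto simp: Ls\<close>)
  have cRb2: "c (P a1 i) b2 = c b2 (P a1 i)" for i
    by (rule comm_pw) (use gens in \<open>auto simp: Ls\<close>)
  have tw: "c (P a1 i) b1 = c b1 (P a2 i)" for i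
    by (rule twist) (use gens in \<open>auto simp: Ls\<close>)
  have sn: "seg G l n (n + e2) = b1"
  proof (rule segx)
    show "l = c (c (c (P a1 n1) (P b2 n2)) b1) (P a2 (M1 - n1))"
    proof -
      have "P a1 M1 = c (P a1 n1) (P a1 (M1 - n1))"
        using pw_add[OF gens(1), of n1 "M1 - n1"] M1_def by simp
      hence "l = c (P a1 n1) (c (P a1 (M1 - n1)) (c (P b2 n2) b1))" unfolding l_def by (simp add: assoc Ls)
      also have "\<dots> = c (P a1 n1) (c (P b2 n2) (c (P a1 (M1 - n1)) b1))"
        by (rule arg_cong[where f="c (P a1 n1)"], rule swap) (auto simp: Ls cb2K)
      also have "\<dots> = c (P a1 n1) (c (P b2 n2) (c b1 (P a2 (M1 - n1))))"
        by (simp only: tw)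
      finally show ?thesis by (simp add: assoc Ls)
    qed
  qed (auto simp: Ls deg_pw degc gens mn e2_def)
  have sm: "seg G l m (m + e2) = b2"
  proof (rule segx)
    show "l = c (c (c (P a1 m1) (P b2 m2)) b2) (c (c (P a1 (M1 - m1)) (P b2 k)) b1)"
    proof -
      have e1: "P a1 M1 = c (P a1 m1) (P a1 (M1 - m1))"
        using pw_add[OF gens(1), of m1 "M1 - m1"] M1_def by simp
      have e2: "P b2 n2 = c (P b2 m2) (c b2 (P b2 k))"
      proof -
        have nk: "n2 = m2 + (1 + k)" unfolding k_def using m2 by simp
        show ?thesis unfolding nk pw_add[OF gens(4)] pw1[OF gens(4)] ..
      qed
      have "l = c (P a1 m1) (c (P a1 (M1 - m1)) (c (P b2 m2) (c b2 (c (P b2 k) b1))))"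
        unfolding l_def e1 e2 by (simp add: assoc Ls)
      also have "\<dots> = c (P a1 m1) (c (P b2 m2) (c (P a1 (M1 - m1)) (c b2 (c (P b2 k) b1))))"
        by (rule arg_cong[where f="c (P a1 m1)"], rule swap) (auto simp: Ls cb2K)
      also have "\<dots> = c (P a1 m1) (c (P b2 m2) (c b2 (c (P a1 (M1 - m1)) (c (P b2 k) b1))))"
        by (intro arg_cong[where f="c (P a1 m1)"] arg_cong[where f="c (P b2 m2)"], rule swap) (auto simp: Ls cRb2)
      finally show ?thesis by (simp add: assoc Ls)
    qed
  qed (auto simp: Ls deg_pw degc gens mn e2_def)
  show ?thesis using lL dl sn sm gens by auto
qed

lemma pairarith: "(m::nat\<times>nat) + (s + e) - s = m + e"
  by (cases m, cases s, cases e, simp)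

lemma pairle: "s \<le> s + (e::nat\<times>nat)"
  by (cases s, cases e, simp)

lemma finish:
  assumes "l \<in> L" "deg G l = sup m n + e" "seg G l m (m + e) \<noteq> seg G l n (n + e)"
  shows "\<exists>l\<in>Mor G. rng G l = u \<and> sup m n \<le> deg G l \<and>
           seg G l m (m + deg G l - sup m n) \<noteq> seg G l n (n + deg G l - sup m n)"
proof (rule bexI[of _ l])
  show "l \<in> Mor G" using assms LM by auto
  show "rng G l = u \<and> sup m n \<le> deg G l \<and>
           seg G l m (m + deg G l - sup m n) \<noteq> seg G l n (n + deg G l - sup m n)"
    unfolding assms(2) pairarith using assms(1,3) LM pairle by simp
qed

lemma main: "no_local_periodicity_at G u"
  unfolding no_local_periodicity_at_def
proof (intro allI impI)
  fix m n :: "nat \<times> nat" assume "m \<noteq> n"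
  hence "fst m < fst n \<or> fst n < fst m \<or> snd m < snd n \<or> snd n < snd m"
    by (cases m, cases n) auto
  then show "\<exists>l\<in>Mor G. rng G l = u \<and> sup m n \<le> deg G l \<and>
           seg G l m (m + deg G l - sup m n) \<noteq> seg G l n (n + deg G l - sup m n)"
  proof (elim disjE)
    assume "fst m < fst n" then show ?thesis using caseA finish by blast
  next
    assume "fst n < fst m" then show ?thesis using caseA[of n m] finish[of _ m n] by (metis sup.commute)
  next
    assume "snd m < snd n" then show ?thesis using caseB finish by blast
  next
    assume "snd n < snd m" then show ?thesis using caseB[of n m] finish[of _ m n] by (metis sup.commute)
  qed
qed

end

theorem theorem3p5:
  fixes G :: "'m twograph" and u al1 al2 be1 be2 :: 'm
  assumes "is_2graph G" and "row_finite G" and "no_sources G"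
    and "aperiodic_quartet G 1 1 u al1 al2 be1 be2"
  shows "no_local_periodicity_at G u"
  using Q.main[of G u al1 al2 be1 be2] assms unfolding Q_def by blast

end
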